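(* Let $n\ge 2$ and $\mu\in[0,1-\frac1n]$, and let $P=(p_{ij})$ be an optimal solution of problem (P) (i.e. an $n\times n$ MICK) all of whose entries are strictly positive. For $i,j\in\{1,\dots,n-1\}$ put $$\eta_{ij}=p_{ij}+p_{i+1,j}+p_{i,j+1}+p_{i+1,j+1}.$$ Then the quantity ("pseudo log odds ratio") $$\frac{1}{\eta_{ij}}\log\frac{p_{ij}\,p_{i+1,j+1}}{p_{i+1,j}\,p_{i,j+1}}$$ takes the same value for all $i,j\in\{1,\dots,n-1\}$.
   Context: An $n\times n$ checkerboard copula is a real $n\times n$ matrix $P=(p_{ij})$ with nonnegative entries whose row sums and column sums all equal $\frac1n$. Let $\Xi=(\xi_{ij})\in\mathbb{R}^{n\times n}$ with $\xi_{ij}=1$ if $i=j$, $\xi_{ij}=2$ if $i>j$, $\xi_{ij}=0$ if $i<j$. Kendall's $\tau$ of $P$ is $\tau(P)=1-\mathrm{tr}(\Xi P\Xi P^\top)$. Problem (P): minimize $I(P)=\sum_{i,j=1}^n p_{ij}\log p_{ij}$ (with $0\log 0=0$) over all $n\times n$ checkerboard copulas $P$ satisfying $1-\mathrm{tr}(\Xi P\Xi P^\top)=\mu$, where $\mu\in[0,1-\frac1n]$ is given. *)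

theory Defs
  imports Complex_Main
begin

text \<open>n x n matrices are functions nat => nat => real, indices 0..n-1 (0-based).\<close>

definition xi :: "nat \<Rightarrow> nat \<Rightarrow> real" where
  "xi i j = (if i = j then 1 else if i > j then 2 else 0)"

definition checkerboard_copula :: "nat \<Rightarrow> (nat \<Rightarrow> nat \<Rightarrow> real) \<Rightarrow> bool" where
  "checkerboard_copula n P \<longleftrightarrow>
     (\<forall>i<n. \<forall>j<n. 0 \<le> P i j) \<and>
     (\<forall>i<n. (\<Sum>j<n. P i j) = 1 / real n) \<and>
     (\<forall>j<n. (\<Sum>i<n. P i j) = 1 / real n)"

text \<open>tr(Xi P Xi P^T) = sum over i j k l of xi_ij p_jk xi_kl p_il.\<close>
definition kendall_tau :: "nat \<Rightarrow> (nat \<Rightarrow> nat \<Rightarrow> real) \<Rightarrow> real" where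
  "kendall_tau n P = 1 - (\<Sum>i<n. \<Sum>j<n. \<Sum>k<n. \<Sum>l<n. xi i j * P j k * xi k l * P i l)"

definition entropy_I :: "nat \<Rightarrow> (nat \<Rightarrow> nat \<Rightarrow> real) \<Rightarrow> real" where
  "entropy_I n P = (\<Sum>i<n. \<Sum>j<n. (if P i j = 0 then 0 else P i j * ln (P i j)))"

definition feasible_P :: "nat \<Rightarrow> real \<Rightarrow> (nat \<Rightarrow> nat \<Rightarrow> real) \<Rightarrow> bool" where
  "feasible_P n \<mu> P \<longleftrightarrow> checkerboard_copula n P \<and> kendall_tau n P = \<mu>"

definition optimal_P :: "nat \<Rightarrow> real \<Rightarrow> (nat \<Rightarrow> nat \<Rightarrow> real) \<Rightarrow> bool" where
  "optimal_P n \<mu> P \<longleftrightarrow> feasible_P n \<mu> P \<and>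
     (\<forall>Q. feasible_P n \<mu> Q \<longrightarrow> entropy_I n P \<le> entropy_I n Q)"

definition eta :: "(nat \<Rightarrow> nat \<Rightarrow> real) \<Rightarrow> nat \<Rightarrow> nat \<Rightarrow> real" where
  "eta P i j = P i j + P (i+1) j + P i (j+1) + P (i+1) (j+1)"

definition pseudo_log_odds :: "(nat \<Rightarrow> nat \<Rightarrow> real) \<Rightarrow> nat \<Rightarrow> nat \<Rightarrow> real" where
  "pseudo_log_odds P i j =
     (1 / eta P i j) * ln ((P i j * P (i+1) (j+1)) / (P (i+1) j * P i (j+1)))"

end

theory Submission
  imports Defs
begin


definition uu :: "nat \<Rightarrow> nat \<Rightarrow> real" where
  "uu a i = (if i = a then 1 else if i = Suc a then -1 else 0)"

definition dd :: "nat \<Rightarrow> nat \<Rightarrow> nat \<Rightarrow> nat \<Rightarrow> real" where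
  "dd a b i j = uu a i * uu b j"

definition BB :: "nat \<Rightarrow> (nat \<Rightarrow> nat \<Rightarrow> real) \<Rightarrow> (nat \<Rightarrow> nat \<Rightarrow> real) \<Rightarrow> real" where
  "BB n X Y = (\<Sum>i<n. \<Sum>j<n. \<Sum>k<n. \<Sum>l<n. xi i j * X j k * xi k l * Y i l)"

lemma sum_uu: assumes "Suc a < n" shows "(\<Sum>i<n. uu a i * f i) = f a - f (Suc a)"
proof -
  have "\<And>i. uu a i * f i = (if i = a then f a else 0) - (if i = Suc a then f (Suc a) else 0)"
    by (auto simp: uu_def)
  then show ?thesis using assms by (simp add: sum_subtractf)
qed

lemma sum_uu0: assumes "Suc a < n" shows "(\<Sum>i<n. uu a i) = 0"
  using sum_uu[OF assms, of "\<lambda>_. 1"] by simp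

lemma xi_diff1: "xi i a - xi i (Suc a) = (if i = a \<or> i = Suc a then 1 else 0)"
  by (auto simp: xi_def)
lemma xi_diff2: "xi b l - xi (Suc b) l = (if l = b \<or> l = Suc b then -1 else 0)"
  by (auto simp: xi_def)

lemma sum_two: assumes "Suc a < n"
  shows "(\<Sum>i<n. (if i = a \<or> i = Suc a then f i else 0)) = f a + f (Suc a)"
proof -
  have "\<And>i. (if i = a \<or> i = Suc a then f i else 0) = (if i = a then f a else 0) + (if i = Suc a then f (Suc a) else 0)"
    by auto
  then show ?thesis using assms by (simp add: sum.distrib)
qed

lemma BB_dd_left: assumes "Suc a < n" "Suc b < n"
  shows "BB n (dd a b) Y = - eta Y a b"
proof -
  have "BB n (dd a b) Y = (\<Sum>i<n. \<Sum>j<n. uu a j * (xi i j * (\<Sum>l<n. Y i l * (\<Sum>k<n. uu b k * xi k l))))"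
    unfolding BB_def dd_def
    apply (rule sum.cong, simp, rule sum.cong, simp)
    apply (subst sum.swap)
    apply (simp add: sum_distrib_left sum_distrib_right mult_ac)
    done
  also have "\<dots> = (\<Sum>i<n. (if i = a \<or> i = Suc a then 1 else 0) * (- (Y i b + Y i (Suc b))))"
  proof (rule sum.cong)
    fix i assume "i \<in> {..<n}"
    have 1: "\<And>l. (\<Sum>k<n. uu b k * xi k l) = (if l = b \<or> l = Suc b then -1 else 0)"
      using sum_uu[OF assms(2)] xi_diff2 by simp
    have 2: "(\<Sum>l<n. Y i l * (\<Sum>k<n. uu b k * xi k l)) = - (Y i b + Y i (Suc b))"
      unfolding 1 using sum_two[OF assms(2), of "\<lambda>l. - Y i l"]
      by (simp add: if_distrib cong: if_cong)
    show "(\<Sum>j<n. uu a j * (xi i j * (\<Sum>l<n. Y i l * (\<Sum>k<n. uu b k * xi k l)))) =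
        (if i = a \<or> i = Suc a then 1 else 0) * (- (Y i b + Y i (Suc b)))"
      unfolding 2 using sum_uu[OF assms(1), of "\<lambda>j. xi i j * (- (Y i b + Y i (Suc b)))"]
      by (simp add: xi_diff1 flip: left_diff_distrib)
  qed simp
  also have "\<dots> = - eta Y a b"
  proof -
    have "\<And>i. (if i = a \<or> i = Suc a then 1 else 0) * (- (Y i b + Y i (Suc b))) = (if i = a \<or> i = Suc a then - (Y i b + Y i (Suc b)) else 0)"
      by simp
    then show ?thesis using sum_two[OF assms(1), of "\<lambda>i. - (Y i b + Y i (Suc b))"]
      by (simp add: eta_def)
  qed
  finally show ?thesis .
qed

lemma swap4: "(\<Sum>i<n. \<Sum>j<n. \<Sum>k<n. \<Sum>l<n. F i j k l) = (\<Sum>j<n. \<Sum>k<n. \<Sum>i<n. \<Sum>l<n. F i j k l :: real)"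
proof -
  have sw: "\<And>H. (\<Sum>i<n. \<Sum>j<n. H i j) = (\<Sum>j<n. \<Sum>i<n. H i j :: real)" by (rule sum.swap)
  have "(\<Sum>i<n. \<Sum>j<n. \<Sum>k<n. \<Sum>l<n. F i j k l) = (\<Sum>j<n. \<Sum>i<n. \<Sum>k<n. \<Sum>l<n. F i j k l)"
    by (rule sw[of "\<lambda>i j. \<Sum>k<n. \<Sum>l<n. F i j k l"])
  also have "\<dots> = (\<Sum>j<n. \<Sum>k<n. \<Sum>i<n. \<Sum>l<n. F i j k l)"
    by (rule sum.cong, simp, rule sw[of "\<lambda>i k. \<Sum>l<n. F i _ k l"])
  finally show ?thesis .
qed

lemma BB_dd_right: assumes "Suc a < n" "Suc b < n"
  shows "BB n Y (dd a b) = - eta Y a b"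
proof -
  have "BB n Y (dd a b) = (\<Sum>j<n. \<Sum>k<n. Y j k * ((\<Sum>i<n. uu a i * xi i j) * (\<Sum>l<n. uu b l * xi k l)))"
    unfolding BB_def dd_def
    apply (subst swap4)
    unfolding sum_product
    unfolding sum_distrib_left
    apply (rule sum.cong, simp, rule sum.cong, simp, rule sum.cong, simp, rule sum.cong, simp)
    apply (simp only: mult_ac)
    done
  also have "\<dots> = (\<Sum>j<n. (if j = a \<or> j = Suc a then - (Y j b + Y j (Suc b)) else 0))"
  proof (rule sum.cong)
    fix j assume "j \<in> {..<n}"
    have 1: "(\<Sum>i<n. uu a i * xi i j) = (if j = a \<or> j = Suc a then -1 else 0)"
      using sum_uu[OF assms(1)] xi_diff2 by simp
    have 2: "\<And>k. (\<Sum>l<n. uu b l * xi k l) = (if k = b \<or> k = Suc b then 1 else 0)"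
      using sum_uu[OF assms(2)] xi_diff1 by simp
    have 3: "(\<Sum>k<n. Y j k * (if k = b \<or> k = Suc b then 1 else 0)) = Y j b + Y j (Suc b)"
      using sum_two[OF assms(2), of "\<lambda>k. Y j k"]
      by (simp add: if_distrib cong: if_cong)
    show "(\<Sum>k<n. Y j k * ((\<Sum>i<n. uu a i * xi i j) * (\<Sum>l<n. uu b l * xi k l))) =
        (if j = a \<or> j = Suc a then - (Y j b + Y j (Suc b)) else 0)"
      unfolding 1 2 using 3 by (auto simp: sum_negf)
  qed simp
  also have "\<dots> = - eta Y a b"
    using sum_two[OF assms(1), of "\<lambda>i. - (Y i b + Y i (Suc b))"] by (simp add: eta_def)
  finally show ?thesis .
qed

lemma BB_add1: "BB n (\<lambda>i j. X i j + Y i j) Z = BB n X Z + BB n Y Z"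
  unfolding BB_def by (simp only: distrib_left distrib_right sum.distrib)
lemma BB_add2: "BB n Z (\<lambda>i j. X i j + Y i j) = BB n Z X + BB n Z Y"
  unfolding BB_def by (simp only: distrib_left distrib_right sum.distrib)
lemma BB_mult1: "BB n (\<lambda>i j. c * X i j) Z = c * BB n X Z"
proof -
  have e: "\<And>i j k l. xi i j * (c * X j k) * xi k l * Z i l = c * (xi i j * X j k * xi k l * Z i l)"
    by simp
  show ?thesis unfolding BB_def e by (simp only: sum_distrib_left[symmetric])
qed
lemma BB_mult2: "BB n Z (\<lambda>i j. c * X i j) = c * BB n Z X"
proof -
  have e: "\<And>i j k l. xi i j * Z j k * xi k l * (c * X i l) = c * (xi i j * Z j k * xi k l * X i l)"
    by simp
  show ?thesis unfolding BB_def e by (simp only: sum_distrib_left[symmetric])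
qed

lemma BB_expand: "BB n (\<lambda>i j. P i j + t * D i j + s * E i j) (\<lambda>i j. P i j + t * D i j + s * E i j)
   = BB n P P + t * (BB n D P + BB n P D) + s * (BB n E P + BB n P E) + t^2 * BB n D D + s^2 * BB n E E
     + t * s * (BB n D E + BB n E D)"
  unfolding BB_add1 BB_add2 BB_mult1 BB_mult2 by (simp add: algebra_simps power2_eq_square)

lemma eta_dd: "eta (dd a b) a b = 0"
  by (simp add: eta_def dd_def uu_def)

lemma sum_dd: assumes "Suc a < n" "Suc b < n"
  shows "(\<Sum>i<n. \<Sum>j<n. dd a b i j * g i j) = g a b - g (Suc a) b - g a (Suc b) + g (Suc a) (Suc b)"
proof -
  have "\<And>i. (\<Sum>j<n. dd a b i j * g i j) = uu a i * (g i b - g i (Suc b))"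
    using sum_uu[OF assms(2)] by (simp add: dd_def mult.assoc flip: sum_distrib_left)
  then show ?thesis using sum_uu[OF assms(1), of "\<lambda>i. g i b - g i (Suc b)"] by simp
qed

lemma rowsum_dd: assumes "Suc a < n" "Suc b < n"
  shows "(\<Sum>j<n. dd a b i j) = 0" "(\<Sum>i<n. dd a b i j) = 0"
proof -
  have "(\<Sum>j<n. dd a b i j) = uu a i * (\<Sum>j<n. uu b j)" by (simp add: dd_def sum_distrib_left)
  then show "(\<Sum>j<n. dd a b i j) = 0" using sum_uu0[OF assms(2)] by simp
  have "(\<Sum>i<n. dd a b i j) = (\<Sum>i<n. uu a i) * uu b j" by (simp add: dd_def sum_distrib_right)
  then show "(\<Sum>i<n. dd a b i j) = 0" using sum_uu0[OF assms(1)] by simp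
qed



definition lo :: "(nat \<Rightarrow> nat \<Rightarrow> real) \<Rightarrow> nat \<Rightarrow> nat \<Rightarrow> real" where
  "lo P a b = ln (P a b) - ln (P (Suc a) b) - ln (P a (Suc b)) + ln (P (Suc a) (Suc b))"

lemma kendall_BB: "kendall_tau n X = 1 - BB n X X"
  unfolding kendall_tau_def BB_def by simp

lemma ent_pos: "\<forall>i<n. \<forall>j<n. 0 < X i j \<Longrightarrow> entropy_I n X = (\<Sum>i<n. \<Sum>j<n. X i j * ln (X i j))"
  unfolding entropy_I_def by (intro sum.cong) auto

lemma deriv_xlnx: fixes q :: "real \<Rightarrow> real" assumes "DERIV q 0 :> q'" "0 < q 0"
  shows "DERIV (\<lambda>t. q t * ln (q t)) 0 :> q' * (ln (q 0) + 1)"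
proof -
  have "DERIV (\<lambda>t. ln (q t)) 0 :> q' / q 0"
    using DERIV_chain2[OF DERIV_ln_divide[OF assms(2)] assms(1)] by simp
  then have "DERIV (\<lambda>t. q t * ln (q t)) 0 :> q' * ln (q 0) + q' / q 0 * q 0"
    by (rule DERIV_mult[OF assms(1)])
  then show ?thesis using assms(2) by (simp add: distrib_left)
qed

lemma deriv_s: assumes "\<beta> \<noteq> (0::real)"
  shows "DERIV (\<lambda>t. - t * \<alpha> / (\<beta> + t * C)) 0 :> - \<alpha> / \<beta>"
proof -
  have d1: "DERIV (\<lambda>t. t * (- \<alpha>)) 0 :> 1 * (- \<alpha>)"
    by (rule DERIV_cmult_right[OF DERIV_ident])
  have d2: "DERIV (\<lambda>t. \<beta> + t * C) 0 :> 0 + 1 * C"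
    by (rule DERIV_add[OF DERIV_const DERIV_cmult_right[OF DERIV_ident]])
  have "DERIV (\<lambda>t. t * (- \<alpha>) / (\<beta> + t * C)) 0 :>
      ((1 * (- \<alpha>)) * (\<beta> + 0 * C) - ((0 + 1 * C) * (0 * (- \<alpha>)))) / ((\<beta> + 0 * C) ^ Suc (Suc 0))"
    by (rule DERIV_quotient[OF d1 d2]) (simp add: assms)
  moreover have "(\<lambda>t. t * (- \<alpha>) / (\<beta> + t * C)) = (\<lambda>t. - t * \<alpha> / (\<beta> + t * C))" by simp
  ultimately show ?thesis using assms by (simp add: power2_eq_square)
qed

lemma sum_lin: "(\<Sum>i<n. \<Sum>j<n. (D i j + c * E i j) * g i j)
   = (\<Sum>i<n. \<Sum>j<n. D i j * g i j) + c * (\<Sum>i<n. \<Sum>j<n. E i j * (g i j :: real))"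
  by (simp only: distrib_right sum.distrib sum_distrib_left mult.assoc)

lemma key:
  assumes n2: "n \<ge> 2" and opt: "optimal_P n \<mu> P" and pos: "\<forall>i<n. \<forall>j<n. 0 < P i j"
    and ab: "Suc a < n" "Suc b < n"
  shows "lo P a b * eta P 0 0 = lo P 0 0 * eta P a b"
proof -
  have n0: "Suc 0 < n" using n2 by simp
  define D where "D = dd a b"
  define E where "E = dd 0 0"
  have eab: "eta P a b > 0" using pos ab by (simp add: eta_def add_pos_pos)
  have e00: "eta P 0 0 > 0" using pos n0 by (simp add: eta_def add_pos_pos)
  define \<alpha> where "\<alpha> = -2 * eta P a b"
  define \<beta> where "\<beta> = -2 * eta P 0 0"
  define C where "C = BB n D E + BB n E D"
  have b0: "\<beta> \<noteq> 0" using e00 by (simp add: \<beta>_def)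
  define s where "s = (\<lambda>t. - t * \<alpha> / (\<beta> + t * C))"
  define Q where "Q = (\<lambda>t i j. P i j + t * D i j + s t * E i j)"
  have s0: "s 0 = 0" by (simp add: s_def)
  have Q0: "Q 0 = P" by (simp add: Q_def s0)
  have featP: "feasible_P n \<mu> P" using opt by (simp add: optimal_P_def)
  have alpha: "BB n D P + BB n P D = \<alpha>"
    using BB_dd_left[OF ab] BB_dd_right[OF ab] by (simp add: D_def \<alpha>_def)
  have beta: "BB n E P + BB n P E = \<beta>"
    using BB_dd_left[OF n0 n0] BB_dd_right[OF n0 n0] by (simp add: E_def \<beta>_def)
  have DD: "BB n D D = 0" using BB_dd_left[OF ab] eta_dd by (simp add: D_def)
  have EE: "BB n E E = 0" using BB_dd_left[OF n0 n0] eta_dd by (simp add: E_def)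
  have feas: "feasible_P n \<mu> (Q t)" if t1: "\<beta> + t * C \<noteq> 0" and t2: "\<forall>i<n. \<forall>j<n. 0 < Q t i j" for t
  proof -
    have cb: "checkerboard_copula n P" using featP by (simp add: feasible_P_def)
    have rows: "(\<Sum>j<n. Q t i j) = 1 / real n" if "i < n" for i
    proof -
      have "(\<Sum>j<n. Q t i j) = (\<Sum>j<n. P i j) + t * (\<Sum>j<n. D i j) + s t * (\<Sum>j<n. E i j)"
        by (simp add: Q_def sum.distrib sum_distrib_left)
      then show ?thesis using cb that rowsum_dd[OF ab] rowsum_dd[OF n0 n0]
        by (simp add: checkerboard_copula_def D_def E_def)
    qed
    have cols: "(\<Sum>i<n. Q t i j) = 1 / real n" if "j < n" for j
    proof -
      have "(\<Sum>i<n. Q t i j) = (\<Sum>i<n. P i j) + t * (\<Sum>i<n. D i j) + s t * (\<Sum>i<n. E i j)"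
        by (simp add: Q_def sum.distrib sum_distrib_left)
      then show ?thesis using cb that rowsum_dd[OF ab] rowsum_dd[OF n0 n0]
        by (simp add: checkerboard_copula_def D_def E_def)
    qed
    have sl: "s t * (\<beta> + t * C) = - t * \<alpha>" using t1 by (simp add: s_def)
    have "BB n (Q t) (Q t) = BB n P P + t * \<alpha> + s t * \<beta> + t * s t * C"
      unfolding Q_def BB_expand alpha beta DD EE C_def by simp
    also have "\<dots> = BB n P P + t * \<alpha> + s t * (\<beta> + t * C)" by (simp add: algebra_simps)
    also have "\<dots> = BB n P P" using sl by simp
    finally have "kendall_tau n (Q t) = kendall_tau n P" by (simp add: kendall_BB)
    then show ?thesis using featP t2 rows cols
      by (auto simp: feasible_P_def checkerboard_copula_def less_imp_le)
  qed
  have ds: "DERIV s 0 :> - \<alpha> / \<beta>" unfolding s_def by (rule deriv_s[OF b0])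
  have cs: "isCont s 0" by (rule DERIV_isCont[OF ds])
  have dQ: "DERIV (\<lambda>t. Q t i j) 0 :> D i j + (- \<alpha> / \<beta>) * E i j" for i j
  proof -
    have "DERIV (\<lambda>t. P i j + t * D i j + s t * E i j) 0 :> 0 + 1 * D i j + (- \<alpha> / \<beta>) * E i j"
      by (intro DERIV_add DERIV_const DERIV_cmult_right DERIV_ident ds)
    then show ?thesis by (simp add: Q_def)
  qed
  define \<psi> where "\<psi> = (\<lambda>t. \<Sum>i<n. \<Sum>j<n. Q t i j * ln (Q t i j))"
  have dpsi: "DERIV \<psi> 0 :> (\<Sum>i<n. \<Sum>j<n. (D i j + (- \<alpha> / \<beta>) * E i j) * (ln (P i j) + 1))"
    unfolding \<psi>_def
  proof (intro DERIV_sum)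
    fix i j assume "i \<in> {..<n}" "j \<in> {..<n}"
    then have "0 < Q 0 i j" using pos Q0 by simp
    from deriv_xlnx[OF dQ this] show "DERIV (\<lambda>t. Q t i j * ln (Q t i j)) 0 :> (D i j + (- \<alpha> / \<beta>) * E i j) * (ln (P i j) + 1)"
      using Q0 by simp
  qed
  have ev1: "\<forall>\<^sub>F t in at 0. \<beta> + t * C \<noteq> 0"
  proof -
    have "((\<lambda>t. \<beta> + t * C) \<longlongrightarrow> \<beta> + 0 * C) (at (0::real))"
      by (intro tendsto_intros)
    then show ?thesis using b0 by (intro tendsto_imp_eventually_ne) auto
  qed
  have ev2: "\<forall>\<^sub>F t in at 0. \<forall>ij\<in>{..<n}\<times>{..<n}. 0 < Q t (fst ij) (snd ij)"
  proof (rule eventually_ball_finite)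
    show "finite ({..<n}\<times>{..<n})" by simp
    show "\<forall>ij\<in>{..<n}\<times>{..<n}. \<forall>\<^sub>F t in at 0. 0 < Q t (fst ij) (snd ij)"
    proof
      fix ij assume ij: "ij \<in> {..<n}\<times>{..<n}"
      obtain i j where ije: "ij = (i, j)" by force
      have "isCont (\<lambda>t. Q t i j) 0" by (rule DERIV_isCont[OF dQ])
      then have "((\<lambda>t. Q t i j) \<longlongrightarrow> Q 0 i j) (at 0)" by (simp add: isCont_def)
      moreover have "0 < Q 0 i j" using pos ij ije Q0 by auto
      ultimately have "\<forall>\<^sub>F t in at 0. 0 < Q t i j" by (rule order_tendstoD(1))
      then show "\<forall>\<^sub>F t in at 0. 0 < Q t (fst ij) (snd ij)" by (simp add: ije)
    qed
  qed
  from eventually_conj[OF ev1 ev2] obtain d where d: "d > 0"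
    and dH: "\<And>t. t \<noteq> 0 \<Longrightarrow> dist t 0 < d \<Longrightarrow> \<beta> + t * C \<noteq> 0 \<and> (\<forall>ij\<in>{..<n}\<times>{..<n}. 0 < Q t (fst ij) (snd ij))"
    unfolding eventually_at by auto
  have lm: "\<forall>t. \<bar>0 - t\<bar> < d \<longrightarrow> \<psi> 0 \<le> \<psi> t"
  proof (intro allI impI)
    fix t :: real assume "\<bar>0 - t\<bar> < d"
    show "\<psi> 0 \<le> \<psi> t"
    proof (cases "t = 0")
      case True then show ?thesis by simp
    next
      case False
      with dH[of t] \<open>\<bar>0 - t\<bar> < d\<close> have h: "\<beta> + t * C \<noteq> 0" "\<forall>i<n. \<forall>j<n. 0 < Q t i j"
        by (auto simp: dist_real_def)
      have "entropy_I n P \<le> entropy_I n (Q t)" using opt feas[OF h] by (simp add: optimal_P_def)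
      then show ?thesis using ent_pos[OF h(2)] ent_pos[OF pos] Q0 by (simp add: \<psi>_def)
    qed
  qed
  have z: "(\<Sum>i<n. \<Sum>j<n. (D i j + (- \<alpha> / \<beta>) * E i j) * (ln (P i j) + 1)) = 0"
    by (rule DERIV_local_min[OF dpsi d lm])
  have "(\<Sum>i<n. \<Sum>j<n. (D i j + (- \<alpha> / \<beta>) * E i j) * (ln (P i j) + 1))
     = (\<Sum>i<n. \<Sum>j<n. D i j * (ln (P i j) + 1)) + (- \<alpha> / \<beta>) * (\<Sum>i<n. \<Sum>j<n. E i j * (ln (P i j) + 1))"
    by (rule sum_lin)
  also have "\<dots> = lo P a b + (- \<alpha> / \<beta>) * lo P 0 0"
    unfolding D_def E_def sum_dd[OF ab] sum_dd[OF n0 n0] by (simp add: lo_def)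
  finally have "lo P a b + (- \<alpha> / \<beta>) * lo P 0 0 = 0" using z by simp
  then show ?thesis using e00 eab unfolding \<alpha>_def \<beta>_def by (simp add: field_simps)
qed

lemma pseudo_lo: assumes "0 < P i j" "0 < P (Suc i) j" "0 < P i (Suc j)" "0 < P (Suc i) (Suc j)"
  shows "pseudo_log_odds P i j = lo P i j / eta P i j"
proof -
  have "ln ((P i j * P (Suc i) (Suc j)) / (P (Suc i) j * P i (Suc j))) = lo P i j"
    using assms by (simp add: ln_div ln_mult lo_def)
  then show ?thesis by (simp add: pseudo_log_odds_def)
qed

theorem theorem3:
  fixes n :: nat and \<mu> :: real and P :: "nat \<Rightarrow> nat \<Rightarrow> real"
  assumes "n \<ge> 2"
    and "0 \<le> \<mu>" and "\<mu> \<le> 1 - 1 / real n"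
    and "optimal_P n \<mu> P"
    and "\<forall>i<n. \<forall>j<n. 0 < P i j"
  shows "\<exists>c. \<forall>i j. i + 1 < n \<and> j + 1 < n \<longrightarrow> pseudo_log_odds P i j = c"
proof (intro exI allI impI)
  fix i j assume ij: "i + 1 < n \<and> j + 1 < n"
  have n0: "Suc 0 < n" using assms(1) by simp
  have ab: "Suc i < n" "Suc j < n" using ij by auto
  have k: "lo P i j * eta P 0 0 = lo P 0 0 * eta P i j"
    by (rule key[OF assms(1) assms(4) assms(5) ab])
  have eab: "eta P i j > 0" using assms(5) ab by (simp add: eta_def add_pos_pos)
  have e00: "eta P 0 0 > 0" using assms(5) n0 by (simp add: eta_def add_pos_pos)
  have "pseudo_log_odds P i j = lo P i j / eta P i j"
    using assms(5) ab by (intro pseudo_lo) auto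
  also have "\<dots> = lo P 0 0 / eta P 0 0" using k eab e00 by (simp add: field_simps)
  also have "\<dots> = pseudo_log_odds P 0 0"
    using assms(5) n0 by (intro pseudo_lo[symmetric]) auto
  finally show "pseudo_log_odds P i j = pseudo_log_odds P 0 0" .
qed


end
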